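(* Let $X_1,\ldots,X_n$ (with $n\geqslant m\geqslant 2$) be independent copies of $X\sim\mathrm{Gamma}(\alpha,\lambda)$, $\alpha,\lambda>0$. Then for each $i=1,\ldots,m$, \[ \mathbb{E}[\widehat{{}_iIG}_{m;\min}]=\frac{1}{m}\left[1-\frac{1}{\alpha}\int_0^\infty\left\{1-\frac{\gamma(\alpha,v)}{\Gamma(\alpha)}\right\}^m{\rm d}v\right]=IG_{m;\min}, \] so that $\widehat{{}_iIG}_{m;\min}$ is an unbiased estimator of $IG_{m;\min}$ for gamma populations.
   Context: $\mathrm{Gamma}(\alpha,\lambda)$ has density $\lambda^\alpha x^{\alpha-1}e^{-\lambda x}/\Gamma(\alpha)$, $x>0$, and mean $\mu=\alpha/\lambda$; $\gamma(\alpha,v)=\int_0^v s^{\alpha-1}e^{-s}\,{\rm d}s$ is the lower incomplete gamma function. The estimator is \[ \widehat{{}_iIG}_{m;\min}=\frac{(m-1)!}{(n-1)(n-2)\cdots(n-m+1)}\,\frac{\sum_{1\leqslant j_1<\cdots<j_m\leqslant n}\left[X_{j_i}-\min\{X_{j_1},\ldots,X_{j_m}\}\right]}{\sum_{k=1}^n X_k}, \] and $IG_{m;\min}=\dfrac{\mathbb{E}[X_1-\min\{X_1,\ldots,X_m\}]}{m\mu}$ is the extended lower Gini index of $X$. *)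

theory Defs
  imports "HOL-Probability.Probability"
begin

definition gamma_density :: "real \<Rightarrow> real \<Rightarrow> real \<Rightarrow> real" where
  "gamma_density a l x =
     (if x > 0 then l powr a * x powr (a - 1) * exp (- l * x) / Gamma a else 0)"

definition lower_inc_gamma :: "real \<Rightarrow> real \<Rightarrow> real" where
  "lower_inc_gamma a v = (LBINT s=0..v. s powr (a - 1) * exp (- s))"

text \<open>A subset
  S of {1..n} with card m corresponds to j_1 < ... < j_m; j_i is the i-th
  smallest element, i.e. sorted_list_of_set S ! (i - 1).\<close>
definition IG_hat :: "nat \<Rightarrow> nat \<Rightarrow> nat \<Rightarrow> (nat \<Rightarrow> 'a \<Rightarrow> real) \<Rightarrow> 'a \<Rightarrow> real" where
  "IG_hat n m i X \<omega> =
     fact (m - 1) / (\<Prod>k=1..m-1. real (n - k)) *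
     ((\<Sum>S\<in>{S. S \<subseteq> {1..n} \<and> card S = m}.
         X (sorted_list_of_set S ! (i - 1)) \<omega> - Min ((\<lambda>j. X j \<omega>) ` S))
      / (\<Sum>k=1..n. X k \<omega>))"

text \<open>Extended lower Gini index IG_{m;min} of X, expressed via i.i.d. copies
  X 1, ..., X m of X: E[X_1 - min(X_1..X_m)] / (m * mu), mu = E[X_1].\<close>
definition IG_min :: "'a measure \<Rightarrow> nat \<Rightarrow> (nat \<Rightarrow> 'a \<Rightarrow> real) \<Rightarrow> real" where
  "IG_min M m X =
     (\<integral>\<omega>. X 1 \<omega> - Min ((\<lambda>j. X j \<omega>) ` {1..m}) \<partial>M) / (real m * (\<integral>\<omega>. X 1 \<omega> \<partial>M))"

end

theory Submission
  imports Defs "HOL-Real_Asymp.Real_Asymp"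
begin


lemma gamma_nn:
  fixes s c :: real assumes s: "s > 0" and c: "c > 0"
  shows "(\<integral>\<^sup>+x. ennreal (indicator {0<..} x * x powr (s-1) * exp (-(c*x))) \<partial>lborel)
     = ennreal (Gamma s / c powr s)"
proof -
  define f where "f t = ennreal (indicator {0..} t * t powr (s - 1) / exp t)" for t :: real
  have fm: "f \<in> borel_measurable borel" unfolding f_def by measurable
  have "ennreal (Gamma s) = (\<integral>\<^sup>+t. f t \<partial>lborel)"
    using Gamma_conv_nn_integral_real[OF s] unfolding f_def by simp
  also have "\<dots> = ennreal \<bar>c\<bar> * (\<integral>\<^sup>+x. f (0 + c * x) \<partial>lborel)"
    using nn_integral_real_affine[OF fm, of c 0] c by simp
  also have "(\<lambda>x. f (0 + c * x)) = (\<lambda>x. ennreal (c powr (s-1)) * ennreal (indicator {0<..} x * x powr (s-1) * exp (-(c*x))))"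
  proof
    fix x :: real
    show "f (0 + c * x) = ennreal (c powr (s-1)) * ennreal (indicator {0<..} x * x powr (s-1) * exp (-(c*x)))"
    proof (cases "x > 0")
      case True
      then show ?thesis using c
        by (simp add: f_def powr_mult exp_minus field_simps ennreal_mult[symmetric] indicator_def)
    next
      case False
      then show ?thesis using c
        by (auto simp: f_def indicator_def zero_le_mult_iff)
    qed
  qed
  also have "ennreal \<bar>c\<bar> * (\<integral>\<^sup>+x. ennreal (c powr (s-1)) * ennreal (indicator {0<..} x * x powr (s-1) * exp (-(c*x))) \<partial>lborel)
     = ennreal (c powr s) * (\<integral>\<^sup>+x. ennreal (indicator {0<..} x * x powr (s-1) * exp (-(c*x))) \<partial>lborel)"
  proof -
    have cc: "c * c powr (s-1) = c powr s" using c
      by (simp add: powr_diff powr_one field_simps)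
    show ?thesis
      by (subst nn_integral_cmult) (auto simp: ennreal_mult[symmetric] mult.assoc[symmetric] cc c less_imp_le)
  qed
  finally have eq: "ennreal (Gamma s) = ennreal (c powr s) * (\<integral>\<^sup>+x. ennreal (indicator {0<..} x * x powr (s-1) * exp (-(c*x))) \<partial>lborel)" .
  have "ennreal (Gamma s / c powr s) = ennreal (1 / c powr s) * ennreal (Gamma s)"
    using c s by (simp add: ennreal_mult[symmetric] Gamma_real_pos less_imp_le)
  also have "\<dots> = (ennreal (1 / c powr s) * ennreal (c powr s)) * (\<integral>\<^sup>+x. ennreal (indicator {0<..} x * x powr (s-1) * exp (-(c*x))) \<partial>lborel)"
    by (simp add: eq mult.assoc)
  also have "ennreal (1 / c powr s) * ennreal (c powr s) = 1"
    using c by (simp add: ennreal_mult[symmetric])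
  finally show ?thesis by simp
qed

lemma upper_gamma:
  fixes a v :: real assumes a: "a > 0" and v: "v \<ge> 0"
  shows "(\<integral>\<^sup>+u. ennreal (indicator {v<..} u * u powr (a-1) * exp (-u)) \<partial>lborel)
     = ennreal (Gamma a - lower_inc_gamma a v)"
    and "0 \<le> lower_inc_gamma a v" and "lower_inc_gamma a v \<le> Gamma a"
proof -
  define h where "h u = u powr (a-1) * exp (-u)" for u :: real
  have hm[measurable]: "h \<in> borel_measurable borel" unfolding h_def by measurable
  have h0: "h u \<ge> 0" for u unfolding h_def by simp
  have G: "(\<integral>\<^sup>+u. ennreal (indicator {0<..} u * h u) \<partial>lborel) = ennreal (Gamma a)"
    using gamma_nn[OF a, of 1] unfolding h_def by (simp add: mult.assoc)
  have split: "ennreal (indicator {0<..} u * h u) = ennreal (indicator {0<..v} u * h u) + ennreal (indicator {v<..} u * h u)" for u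
    using v h0[of u] by (auto simp: indicator_def)
  have "(\<integral>\<^sup>+u. ennreal (indicator {0<..} u * h u) \<partial>lborel)
     = (\<integral>\<^sup>+u. ennreal (indicator {0<..v} u * h u) \<partial>lborel) + (\<integral>\<^sup>+u. ennreal (indicator {v<..} u * h u) \<partial>lborel)"
    unfolding split by (rule nn_integral_add) auto
  hence sum: "ennreal (Gamma a) = (\<integral>\<^sup>+u. ennreal (indicator {0<..v} u * h u) \<partial>lborel) + (\<integral>\<^sup>+u. ennreal (indicator {v<..} u * h u) \<partial>lborel)"
    using G by simp
  have ind: "indicator {0..v} u * h u = indicator {0<..v} u * h u" for u
    by (cases "u = 0") (auto simp: indicator_def h_def)
  have Afin: "(\<integral>\<^sup>+u. ennreal (indicator {0<..v} u * h u) \<partial>lborel) \<le> ennreal (Gamma a)"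
    unfolding sum by simp
  have int: "integrable lborel (\<lambda>u. indicator {0<..v} u * h u)"
  proof (rule integrableI_bounded)
    show "(\<lambda>u. indicator {0<..v} u * h u) \<in> borel_measurable lborel" by measurable
    have "(\<integral>\<^sup>+u. ennreal (norm (indicator {0<..v} u * h u)) \<partial>lborel) = (\<integral>\<^sup>+u. ennreal (indicator {0<..v} u * h u) \<partial>lborel)"
      using h0 by (intro nn_integral_cong) (auto simp: indicator_def)
    also have "\<dots> < \<infinity>" using Afin by (simp add: order_le_less_trans)
    finally show "(\<integral>\<^sup>+u. ennreal (norm (indicator {0<..v} u * h u)) \<partial>lborel) < \<infinity>" .
  qed
  have lig: "lower_inc_gamma a v = (\<integral>u. indicator {0<..v} u * h u \<partial>lborel)"
  proof -
    have "lower_inc_gamma a v = (LBINT s=ereal 0..ereal v. h s)"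
      unfolding lower_inc_gamma_def h_def by (simp add: zero_ereal_def)
    also have "\<dots> = (LBINT s:{0..v}. h s)" using v by (rule interval_integral_Icc)
    finally show ?thesis by (simp add: set_lebesgue_integral_def ind)
  qed
  have A: "(\<integral>\<^sup>+u. ennreal (indicator {0<..v} u * h u) \<partial>lborel) = ennreal (lower_inc_gamma a v)"
    unfolding lig using h0 by (intro nn_integral_eq_integral int) auto
  show lig0: "0 \<le> lower_inc_gamma a v" unfolding lig using h0 by (intro integral_nonneg_AE) auto
  show "lower_inc_gamma a v \<le> Gamma a" using Afin A lig0 Gamma_real_pos[OF a]
    by (simp add: ennreal_le_iff)
  have "ennreal (Gamma a) = ennreal (lower_inc_gamma a v) + (\<integral>\<^sup>+u. ennreal (indicator {v<..} u * h u) \<partial>lborel)"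
    using sum A by simp
  hence "(\<integral>\<^sup>+u. ennreal (indicator {v<..} u * h u) \<partial>lborel) = ennreal (Gamma a) - ennreal (lower_inc_gamma a v)"
    by (simp add: ennreal_add_diff_cancel_left)
  also have "\<dots> = ennreal (Gamma a - lower_inc_gamma a v)" using lig0 by (simp add: ennreal_minus)
  finally show "(\<integral>\<^sup>+u. ennreal (indicator {v<..} u * u powr (a-1) * exp (-u)) \<partial>lborel)
     = ennreal (Gamma a - lower_inc_gamma a v)" by (simp add: h_def mult.assoc)
qed

definition Sv :: "real \<Rightarrow> real \<Rightarrow> real" where
  "Sv a v = 1 - lower_inc_gamma a v / Gamma a"

lemma gd_nonneg: "a > 0 \<Longrightarrow> l > 0 \<Longrightarrow> gamma_density a l x \<ge> 0"
  by (simp add: gamma_density_def Gamma_real_pos less_imp_le)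

lemma gd_measurable[measurable]: "gamma_density a l \<in> borel_measurable borel"
  unfolding gamma_density_def by measurable

lemma Sv_nonneg: "a > 0 \<Longrightarrow> v \<ge> 0 \<Longrightarrow> Sv a v \<ge> 0"
  using upper_gamma(3)[of a v] Gamma_real_pos[of a] by (simp add: Sv_def field_simps)

lemma Sv_le1: "a > 0 \<Longrightarrow> v \<ge> 0 \<Longrightarrow> Sv a v \<le> 1"
  using upper_gamma(2)[of a v] Gamma_real_pos[of a] by (simp add: Sv_def field_simps)

lemma Gamma_nz: assumes "a > 0" shows "Gamma (a::real) \<noteq> 0"
  using Gamma_real_pos[OF assms] by linarith

lemma Gamma_1p: assumes "a > 0" shows "Gamma (1 + a) = a * Gamma (a::real)"
proof -
  have "a \<notin> \<int>\<^sub>\<le>\<^sub>0" using assms nonpos_Ints_nonpos[of a] by auto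
  thus ?thesis using Gamma_plus1[of a] by (simp add: add.commute)
qed

lemma gd_exp:
  fixes a l t :: real assumes a: "a > 0" and l: "l > 0" and t: "t \<ge> 0"
  shows "(\<integral>\<^sup>+x. ennreal (gamma_density a l x) * ennreal (exp (-(t*x))) \<partial>lborel) = ennreal ((l/(l+t)) powr a)"
proof -
  have r: "l + t > 0" using l t by simp
  have "(\<integral>\<^sup>+x. ennreal (gamma_density a l x) * ennreal (exp (-(t*x))) \<partial>lborel)
      = (\<integral>\<^sup>+x. ennreal (l powr a / Gamma a) * ennreal (indicator {0<..} x * x powr (a-1) * exp (-((l+t)*x))) \<partial>lborel)"
    using a by (intro nn_integral_cong)
       (auto simp: gamma_density_def indicator_def ennreal_mult[symmetric] Gamma_real_pos less_imp_le
          mult_exp_exp field_simps)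
  also have "\<dots> = ennreal (l powr a / Gamma a) * ennreal (Gamma a / (l+t) powr a)"
    by (subst nn_integral_cmult) (auto simp: gamma_nn[OF a r])
  also have "\<dots> = ennreal ((l/(l+t)) powr a)"
    using a l r Gamma_real_pos[OF a] Gamma_nz[OF a]
    by (simp add: ennreal_mult[symmetric] less_imp_le powr_divide)
  finally show ?thesis .
qed

lemma gd_xexp:
  fixes a l t :: real assumes a: "a > 0" and l: "l > 0" and t: "t \<ge> 0"
  shows "(\<integral>\<^sup>+x. ennreal (gamma_density a l x) * ennreal (max x 0 * exp (-(t*x))) \<partial>lborel)
     = ennreal ((l/(l+t)) powr a * (a / (l+t)))"
proof -
  have r: "l + t > 0" using l t by simp
  have a1: "a + 1 > 0" using a by simp
  have "(\<integral>\<^sup>+x. ennreal (gamma_density a l x) * ennreal (max x 0 * exp (-(t*x))) \<partial>lborel)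
      = (\<integral>\<^sup>+x. ennreal (l powr a / Gamma a) * ennreal (indicator {0<..} x * x powr ((a+1)-1) * exp (-((l+t)*x))) \<partial>lborel)"
  proof (intro nn_integral_cong)
    fix x :: real
    show "ennreal (gamma_density a l x) * ennreal (max x 0 * exp (-(t*x))) =
      ennreal (l powr a / Gamma a) * ennreal (indicator {0<..} x * x powr ((a+1)-1) * exp (-((l+t)*x)))"
    proof (cases "x > 0")
      case True
      have "x powr (a-1) * x = x powr ((a-1)+1)" using True powr_add[of x "a-1" 1]
        by simp
      hence "x powr ((a+1)-1) = x powr (a-1) * x" by simp
      then show ?thesis using True a
        by (auto simp: gamma_density_def indicator_def ennreal_mult[symmetric] Gamma_real_pos less_imp_le
          mult_exp_exp field_simps)
    qed (auto simp: gamma_density_def)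
  qed
  also have "\<dots> = ennreal (l powr a / Gamma a) * ennreal (Gamma (a+1) / (l+t) powr (a+1))"
    by (subst nn_integral_cmult) (auto simp: gamma_nn[OF a1 r, simplified])
  also have "\<dots> = ennreal ((l powr a / Gamma a) * (Gamma (a+1) / (l+t) powr (a+1)))"
    using a1 r Gamma_real_pos[OF a] Gamma_real_pos[OF a1]
    by (intro ennreal_mult[symmetric]) auto
  also have "(l powr a / Gamma a) * (Gamma (a+1) / (l+t) powr (a+1)) = (l/(l+t)) powr a * (a / (l+t))"
    using a l r Gamma_real_pos[OF a] Gamma_nz[OF a] Gamma_plus1[of a] Gamma_1p[OF a]
    by (simp add: powr_divide powr_add field_simps)
  finally show ?thesis .
qed

lemma gd_tail:
  fixes a l t s :: real assumes a: "a > 0" and l: "l > 0" and t: "t \<ge> 0" and s: "s \<ge> 0"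
  shows "(\<integral>\<^sup>+x. ennreal (gamma_density a l x) * ennreal (indicator {s<..} x * exp (-(t*x))) \<partial>lborel)
     = ennreal ((l/(l+t)) powr a * Sv a ((l+t) * s))"
proof -
  define r where "r = l + t"
  have r: "r > 0" using l t by (simp add: r_def)
  define f where "f x = ennreal (indicator {s<..} x * x powr (a-1) * exp (-(r*x)))" for x :: real
  have fm: "f \<in> borel_measurable borel" unfolding f_def by measurable
  have "(\<integral>\<^sup>+x. ennreal (gamma_density a l x) * ennreal (indicator {s<..} x * exp (-(t*x))) \<partial>lborel)
      = (\<integral>\<^sup>+x. ennreal (l powr a / Gamma a) * f x \<partial>lborel)"
    using a s unfolding f_def r_def by (intro nn_integral_cong)
       (auto simp: gamma_density_def indicator_def ennreal_mult[symmetric] Gamma_real_pos less_imp_le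
          mult_exp_exp field_simps)
  also have "\<dots> = ennreal (l powr a / Gamma a) * (\<integral>\<^sup>+x. f x \<partial>lborel)"
    using fm by (subst nn_integral_cmult) auto
  also have "(\<integral>\<^sup>+x. f x \<partial>lborel) = ennreal \<bar>1/r\<bar> * (\<integral>\<^sup>+u. f (0 + (1/r) * u) \<partial>lborel)"
    using nn_integral_real_affine[OF fm, of "1/r" 0] r by simp
  also have "(\<lambda>u. f (0 + (1/r) * u)) = (\<lambda>u. ennreal (r powr (1-a)) * ennreal (indicator (greaterThan (r * s)) u * u powr (a-1) * exp (-u)))"
  proof
    fix u :: real
    show "f (0 + (1/r) * u) = ennreal (r powr (1-a)) * ennreal (indicator (greaterThan (r * s)) u * u powr (a-1) * exp (-u))"
    proof (cases "u > r * s")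
      case True
      hence u: "u > 0" using r s by (smt (verit) mult_nonneg_nonneg)
      have "(u / r) powr (a - 1) = r powr (1-a) * u powr (a-1)" using u r
        by (simp add: powr_divide powr_minus_divide[symmetric] powr_diff field_simps)
      then show ?thesis using True r u unfolding f_def
        by (auto simp: indicator_def ennreal_mult[symmetric] field_simps)
    next
      case False
      then show ?thesis using r unfolding f_def by (auto simp: indicator_def field_simps)
    qed
  qed
  also have "(\<integral>\<^sup>+u. ennreal (r powr (1-a)) * ennreal (indicator (greaterThan (r * s)) u * u powr (a-1) * exp (-u)) \<partial>lborel)
     = ennreal (r powr (1-a)) * ennreal (Gamma a - lower_inc_gamma a (r * s))"
    using r s by (subst nn_integral_cmult) (auto simp: upper_gamma(1)[OF a])
  also have "ennreal (l powr a / Gamma a) * (ennreal \<bar>1/r\<bar> * (ennreal (r powr (1-a)) * ennreal (Gamma a - lower_inc_gamma a (r * s))))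
     = ennreal ((l powr a / Gamma a) * ((1/r) * (r powr (1-a) * (Gamma a - lower_inc_gamma a (r * s)))))"
    using r s upper_gamma(3)[OF a, of "r * s"] Gamma_real_pos[OF a]
    by (simp add: ennreal_mult[symmetric] less_imp_le)
  also have "(l powr a / Gamma a) * ((1/r) * (r powr (1-a) * (Gamma a - lower_inc_gamma a (r * s))))
     = (l/r) powr a * Sv a (r * s)"
  proof -
    have "(1/r) * r powr (1-a) = 1 / r powr a" using r by (simp add: powr_diff field_simps)
    thus ?thesis using r l Gamma_real_pos[OF a] by (simp add: Sv_def powr_divide field_simps)
  qed
  finally show ?thesis by (simp add: r_def)
qed

lemma t_integral:
  fixes p l c :: real assumes p: "p > 0" and l: "l > 0" and c: "c \<ge> 0"
  shows "(\<integral>\<^sup>+t. ennreal ((l/(l+t)) powr p * (c/(l+t))) * indicator {0..} t \<partial>lborel) = ennreal (c/p)"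
proof -
  define F where "F t = -(c/p) * l powr p * (l+t) powr (-p)" for t :: real
  have eq: "(l/(l+t)) powr p * (c/(l+t)) = c * l powr p * (l+t) powr (-p-1)" if "t \<ge> 0" for t
  proof -
    have lt: "l + t > 0" using that l by simp
    have "(l+t) powr (-p-1) = (l+t) powr (-p) / (l+t)" using lt by (simp add: powr_diff)
    thus ?thesis using lt l by (simp add: powr_divide powr_minus field_simps)
  qed
  have "(\<integral>\<^sup>+t. ennreal ((l/(l+t)) powr p * (c/(l+t))) * indicator {0..} t \<partial>lborel)
      = (\<integral>\<^sup>+t. ennreal (c * l powr p * (l+t) powr (-p-1)) * indicator {0..} t \<partial>lborel)"
    by (intro nn_integral_cong) (auto simp: eq[symmetric] indicator_def)
  also have "\<dots> = 0 - F 0"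
  proof (rule nn_integral_FTC_atLeast)
    show "(\<lambda>t. c * l powr p * (l+t) powr (-p-1)) \<in> borel_measurable borel" by measurable
    fix x :: real assume x: "0 \<le> x"
    have lx: "l + x > 0" using l x by simp
    show "0 \<le> c * l powr p * (l+x) powr (-p-1)" using c lx by simp
    show "DERIV F x :> c * l powr p * (l+x) powr (-p-1)" unfolding F_def
      using lx l p by (auto intro!: derivative_eq_intros simp: field_simps)
  next
    show "(F \<longlongrightarrow> 0) at_top" unfolding F_def using p l by real_asymp
  qed
  also have "0 - F 0 = c / p" using l p by (simp add: F_def powr_minus field_simps)
  finally show ?thesis .
qed

lemma laplace_inv:
  fixes T :: real assumes T: "T > 0"
  shows "(\<integral>\<^sup>+t. ennreal (exp (-(t*T))) * indicator {0..} t \<partial>lborel) = ennreal (1/T)"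
proof -
  define F where "F t = -(exp (-(t*T)) / T)" for t :: real
  have "(\<integral>\<^sup>+t. ennreal (exp (-(t*T))) * indicator {0..} t \<partial>lborel) = 0 - F 0"
  proof (rule nn_integral_FTC_atLeast)
    show "(\<lambda>t. exp (-(t*T))) \<in> borel_measurable borel" by measurable
    fix x :: real assume x: "0 \<le> x"
    show "0 \<le> exp (-(x*T))" by simp
    show "DERIV F x :> exp (-(x*T))" unfolding F_def using T
      by (auto intro!: derivative_eq_intros simp: field_simps)
  next
    show "(F \<longlongrightarrow> 0) at_top" unfolding F_def using T by real_asymp
  qed
  also have "0 - F 0 = 1/T" by (simp add: F_def)
  finally show ?thesis .
qed

lemma prod_if_inter:
  fixes g :: "nat \<Rightarrow> 'b::comm_monoid_mult"
  assumes "S \<subseteq> I" "finite I"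
  shows "(\<Prod>k\<in>I. if k \<in> S then g k else 1) = (\<Prod>k\<in>S. g k)"
proof -
  have "(\<Prod>k\<in>I. if k \<in> S then g k else 1) = (\<Prod>k\<in>I \<inter> S. g k)"
    using assms by (simp add: prod.inter_restrict)
  also have "I \<inter> S = S" using assms by auto
  finally show ?thesis .
qed

definition Svm :: "real \<Rightarrow> real \<Rightarrow> real" where
  "Svm a v = enn2real (\<integral>\<^sup>+u. ennreal (if v < u then u powr (a-1) * exp (-u) else 0) \<partial>lborel) / Gamma a"

lemma Svm_measurable[measurable]: "Svm a \<in> borel_measurable borel"
  unfolding Svm_def by measurable

lemma Sv_Svm: assumes a: "a > 0" and v: "v \<ge> 0" shows "Sv a v = Svm a v"
proof -
  have "(\<integral>\<^sup>+u. ennreal (if v < u then u powr (a-1) * exp (-u) else 0) \<partial>lborel)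
      = (\<integral>\<^sup>+u. ennreal (indicator {v<..} u * u powr (a-1) * exp (-u)) \<partial>lborel)"
    by (intro nn_integral_cong) (auto simp: indicator_def)
  also have "\<dots> = ennreal (Gamma a - lower_inc_gamma a v)" by (rule upper_gamma(1)[OF a v])
  finally have "Svm a v = (Gamma a - lower_inc_gamma a v) / Gamma a"
    unfolding Svm_def using upper_gamma(3)[OF a v] by simp
  thus ?thesis unfolding Sv_def using Gamma_nz[OF a] by (simp add: field_simps)
qed

definition Kp :: "real \<Rightarrow> nat \<Rightarrow> ennreal" where
  "Kp a m = (\<integral>\<^sup>+v. ennreal (Sv a v ^ m) * indicator {0..} v \<partial>lborel)"

lemma Sv_ind_eq: "a > 0 \<Longrightarrow> ennreal (Sv a v ^ m) * indicator {0..} v = ennreal (Svm a v ^ m) * indicator {0..} v"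
  by (cases "v \<ge> 0") (auto simp: Sv_Svm)

lemma Sv_ind_measurable: "a > 0 \<Longrightarrow> (\<lambda>v. ennreal (Sv a v ^ m) * indicator {0..} v) \<in> borel_measurable borel"
  by (subst Sv_ind_eq) (auto)

lemma Kp_scale:
  assumes a: "a > 0" and r: "r > 0"
  shows "(\<integral>\<^sup>+s. ennreal (Sv a (r * s) ^ m) * indicator {0..} s \<partial>lborel) = ennreal (1/r) * Kp a m"
proof -
  define g where "g v = ennreal (Sv a v ^ m) * indicator {0..} v" for v
  have gm: "g \<in> borel_measurable borel" unfolding g_def using Sv_ind_measurable[OF a] by simp
  have "Kp a m = ennreal \<bar>r\<bar> * (\<integral>\<^sup>+s. g (0 + r * s) \<partial>lborel)"
    unfolding Kp_def g_def[symmetric] using nn_integral_real_affine[OF gm, of r 0] r by simp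
  also have "(\<lambda>s. g (0 + r * s)) = (\<lambda>s. ennreal (Sv a (r * s) ^ m) * indicator {0..} s)"
    using r by (auto simp: g_def indicator_def zero_le_mult_iff fun_eq_iff)
  finally have eq: "Kp a m = ennreal r * (\<integral>\<^sup>+s. ennreal (Sv a (r * s) ^ m) * indicator {0..} s \<partial>lborel)"
    using r by simp
  have "ennreal (1/r) * Kp a m = (ennreal (1/r) * ennreal r) * (\<integral>\<^sup>+s. ennreal (Sv a (r * s) ^ m) * indicator {0..} s \<partial>lborel)"
    unfolding eq by (simp add: mult.assoc)
  also have "ennreal (1/r) * ennreal r = 1" using r by (simp add: ennreal_mult[symmetric])
  finally show ?thesis by simp
qed

lemma prod_indicator_real:
  "finite S \<Longrightarrow> (\<Prod>k\<in>S. indicator A (f k) :: real) = (if \<forall>k\<in>S. f k \<in> A then 1 else 0)"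
  by (induction S rule: finite_induct) (auto simp: indicator_def)

lemma comb_id:
  assumes "1 \<le> m" "m \<le> n"
  shows "real (n choose m) * fact (m - 1) * real m = real n * (\<Prod>k=1..m-1. real (n - k))"
proof -
  have "real (n choose m) * fact m = (\<Prod>i=0..<m. real n - real i)"
    by (simp add: binomial_gbinomial gbinomial_mult_fact')
  also have "\<dots> = (real n - real 0) * (\<Prod>i=Suc 0..<m. real n - real i)"
    using assms by (intro prod.atLeast_Suc_lessThan) simp
  also have "(\<Prod>i=Suc 0..<m. real n - real i) = (\<Prod>k=1..m-1. real (n - k))"
  proof -
    have "{Suc 0..<m} = {1..m-1}" using assms by auto
    moreover have "real n - real k = real (n - k)" if "k \<in> {1..m-1}" for k
    proof -
      have "k \<le> n" using that assms by auto
      thus ?thesis by (simp add: of_nat_diff)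
    qed
    ultimately show ?thesis by (intro prod.cong) auto
  qed
  also have "fact m = fact (m - 1) * real m"
    using assms by (metis Suc_diff_1 fact_Suc le_less_trans less_numeral_extra(1) mult.commute of_nat_Suc zero_less_one le_less)
  finally show ?thesis by (simp add: mult.assoc)
qed

lemma Kreal:
  assumes a: "a > 0"
  shows "(LBINT v:{0..}. (1 - lower_inc_gamma a v / Gamma a) ^ m) = enn2real (Kp a m)"
proof -
  have "(LBINT v:{0..}. (1 - lower_inc_gamma a v / Gamma a) ^ m) = (\<integral>v. indicator {0..} v * (1 - lower_inc_gamma a v / Gamma a) ^ m \<partial>lborel)"
    by (simp add: set_lebesgue_integral_def)
  also have "\<dots> = (\<integral>v. indicator {0..} v * Svm a v ^ m \<partial>lborel)"
    by (rule Bochner_Integration.integral_cong) (auto simp: indicator_def Sv_Svm[OF a, symmetric] Sv_def)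
  also have "\<dots> = enn2real (\<integral>\<^sup>+v. ennreal (indicator {0..} v * Svm a v ^ m) \<partial>lborel)"
  proof (rule integral_eq_nn_integral)
    show "(\<lambda>v. indicator {0..} v * Svm a v ^ m) \<in> borel_measurable lborel" by simp
    show "AE v in lborel. 0 \<le> indicator {0..} v * Svm a v ^ m"
      by (intro AE_I2) (auto simp: indicator_def Sv_Svm[OF a, symmetric] Sv_nonneg[OF a])
  qed
  also have "(\<integral>\<^sup>+v. ennreal (indicator {0..} v * Svm a v ^ m) \<partial>lborel) = Kp a m"
    unfolding Kp_def by (intro nn_integral_cong) (auto simp: indicator_def Sv_Svm[OF a])
  finally show ?thesis .
qed

locale gsetup = prob_space M for M :: "'a measure" +
  fixes X :: "nat \<Rightarrow> 'a \<Rightarrow> real" and n :: nat and a l :: real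
  assumes a_pos: "a > 0" and l_pos: "l > 0"
    and indep: "indep_vars (\<lambda>_. borel) X {1..n}"
    and distX: "\<And>k. k \<in> {1..n} \<Longrightarrow> distributed M lborel (X k) (\<lambda>x. ennreal (gamma_density a l x))"
begin

lemma Xm: "k \<in> {1..n} \<Longrightarrow> X k \<in> borel_measurable M"
  using distributed_measurable[OF distX[of k]] by simp

lemma Tm[measurable]: "(\<lambda>\<omega>. \<Sum>k\<in>{1..n}. X k \<omega>) \<in> borel_measurable M"
  by (rule borel_measurable_sum) (rule Xm)

lemma AE_pos: "AE \<omega> in M. \<forall>k\<in>{1..n}. X k \<omega> > 0"
proof (rule AE_finite_allI, simp)
  fix k assume k: "k \<in> {1..n}"
  have "AE x in distr M lborel (X k). x > 0"
    unfolding distributed_distr_eq_density[OF distX[OF k]]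
    by (subst AE_density) (auto simp: gamma_density_def)
  then show "AE \<omega> in M. X k \<omega> > 0"
    by (rule AE_distrD[rotated]) (use Xm[OF k] in simp)
qed

lemma factor:
  fixes f :: "nat \<Rightarrow> real \<Rightarrow> real"
  assumes f0: "\<And>k x. 0 \<le> f k x" and fm: "\<And>k. f k \<in> borel_measurable borel"
  shows "(\<integral>\<^sup>+\<omega>. ennreal (\<Prod>k\<in>{1..n}. f k (X k \<omega>)) \<partial>M)
       = (\<Prod>k\<in>{1..n}. \<integral>\<^sup>+x. ennreal (gamma_density a l x) * ennreal (f k x) \<partial>lborel)"
proof -
  have fm': "(\<lambda>x. ennreal (f k x)) \<in> borel_measurable borel" for k
  proof -
    have [measurable]: "f k \<in> borel_measurable borel" by (rule fm)
    show ?thesis by measurable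
  qed
  have ind2: "indep_vars (\<lambda>_. borel) (\<lambda>k \<omega>. ennreal (f k (X k \<omega>))) {1..n}"
    by (rule indep_vars_compose2[OF indep]) (simp add: fm')
  have pe: "ennreal (\<Prod>k\<in>{1..n}. f k (X k \<omega>)) = (\<Prod>k\<in>{1..n}. ennreal (f k (X k \<omega>)))" for \<omega>
    using f0 by (simp add: prod_ennreal)
  have "(\<integral>\<^sup>+\<omega>. ennreal (\<Prod>k\<in>{1..n}. f k (X k \<omega>)) \<partial>M) = (\<Prod>k\<in>{1..n}. \<integral>\<^sup>+\<omega>. ennreal (f k (X k \<omega>)) \<partial>M)"
    unfolding pe using indep_vars_nn_integral[OF _ ind2] by simp
  also have "\<dots> = (\<Prod>k\<in>{1..n}. \<integral>\<^sup>+x. ennreal (gamma_density a l x) * ennreal (f k x) \<partial>lborel)"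
    by (intro prod.cong refl distributed_nn_integral[symmetric, OF distX]) (auto simp: fm')
  finally show ?thesis .
qed

lemma pow_powr: "x > 0 \<Longrightarrow> (x powr a) ^ n = x powr (real n * a)"
  by (simp add: powr_realpow[symmetric] powr_powr mult.commute)

lemma E1:
  assumes j: "j \<in> {1..n}" and t: "t \<ge> 0"
  shows "(\<integral>\<^sup>+\<omega>. ennreal (max (X j \<omega>) 0 * exp (-(t * (\<Sum>k\<in>{1..n}. X k \<omega>)))) \<partial>M)
     = ennreal ((l/(l+t)) powr (real n * a) * (a/(l+t)))"
proof -
  define f where "f k x = (if k = j then max x 0 else 1) * exp (-(t*x))" for k x
  have r: "l + t > 0" using l_pos t by simp
  have pw: "max (X j \<omega>) 0 * exp (-(t * (\<Sum>k\<in>{1..n}. X k \<omega>))) = (\<Prod>k\<in>{1..n}. f k (X k \<omega>))" for \<omega>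
  proof -
    have "(\<Prod>k\<in>{1..n}. f k (X k \<omega>)) = (\<Prod>k\<in>{1..n}. if k = j then max (X k \<omega>) 0 else 1) * (\<Prod>k\<in>{1..n}. exp (-(t * X k \<omega>)))"
      unfolding f_def by (simp add: prod.distrib)
    also have "(\<Prod>k\<in>{1..n}. if k = j then max (X k \<omega>) 0 else 1) = max (X j \<omega>) 0"
      using j by simp
    also have "(\<Prod>k\<in>{1..n}. exp (-(t * X k \<omega>))) = exp (\<Sum>k\<in>{1..n}. -(t * X k \<omega>))"
      by (simp add: exp_sum)
    also have "(\<Sum>k\<in>{1..n}. -(t * X k \<omega>)) = -(t * (\<Sum>k\<in>{1..n}. X k \<omega>))"
      by (simp add: sum_negf sum_distrib_left)
    finally show ?thesis by simp
  qed
  have "(\<integral>\<^sup>+\<omega>. ennreal (max (X j \<omega>) 0 * exp (-(t * (\<Sum>k\<in>{1..n}. X k \<omega>)))) \<partial>M)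
     = (\<Prod>k\<in>{1..n}. \<integral>\<^sup>+x. ennreal (gamma_density a l x) * ennreal (f k x) \<partial>lborel)"
    unfolding pw by (rule factor) (auto simp: f_def)
  also have "\<dots> = (\<Prod>k\<in>{1..n}. ennreal ((l/(l+t)) powr a * (if k = j then a/(l+t) else 1)))"
  proof (intro prod.cong refl)
    fix k assume k: "k \<in> {1..n}"
    show "(\<integral>\<^sup>+x. ennreal (gamma_density a l x) * ennreal (f k x) \<partial>lborel) = ennreal ((l/(l+t)) powr a * (if k = j then a/(l+t) else 1))"
      by (cases "k = j") (simp_all add: f_def gd_xexp[OF a_pos l_pos t] gd_exp[OF a_pos l_pos t])
  qed
  also have "\<dots> = ennreal (\<Prod>k\<in>{1..n}. (l/(l+t)) powr a * (if k = j then a/(l+t) else 1))"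
    using r a_pos by (intro prod_ennreal) auto
  also have "(\<Prod>k\<in>{1..n}. (l/(l+t)) powr a * (if k = j then a/(l+t) else 1)) = (l/(l+t)) powr (real n * a) * (a/(l+t))"
    using j r l_pos by (simp add: prod.distrib pow_powr)
  finally show ?thesis .
qed

lemma E2:
  assumes S: "S \<subseteq> {1..n}" and t: "t \<ge> 0" and s: "s \<ge> 0"
  shows "(\<integral>\<^sup>+\<omega>. ennreal ((\<Prod>k\<in>S. indicator {s<..} (X k \<omega>)) * exp (-(t * (\<Sum>k\<in>{1..n}. X k \<omega>)))) \<partial>M)
     = ennreal ((l/(l+t)) powr (real n * a) * Sv a ((l+t) * s) ^ card S)"
proof -
  define f where "f k x = (if k \<in> S then indicator {s<..} x else 1) * exp (-(t*x))" for k x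
  have r: "l + t > 0" using l_pos t by simp
  have pw: "(\<Prod>k\<in>S. indicator {s<..} (X k \<omega>)) * exp (-(t * (\<Sum>k\<in>{1..n}. X k \<omega>))) = (\<Prod>k\<in>{1..n}. f k (X k \<omega>))" for \<omega>
  proof -
    have "(\<Prod>k\<in>{1..n}. f k (X k \<omega>)) = (\<Prod>k\<in>{1..n}. if k \<in> S then indicator {s<..} (X k \<omega>) else 1) * (\<Prod>k\<in>{1..n}. exp (-(t * X k \<omega>)))"
      unfolding f_def by (simp add: prod.distrib)
    also have "(\<Prod>k\<in>{1..n}. if k \<in> S then indicator {s<..} (X k \<omega>) else 1) = (\<Prod>k\<in>S. indicator {s<..} (X k \<omega>) :: real)"
      using S by (intro prod_if_inter) auto
    also have "(\<Prod>k\<in>{1..n}. exp (-(t * X k \<omega>))) = exp (\<Sum>k\<in>{1..n}. -(t * X k \<omega>))"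
      by (simp add: exp_sum)
    also have "(\<Sum>k\<in>{1..n}. -(t * X k \<omega>)) = -(t * (\<Sum>k\<in>{1..n}. X k \<omega>))"
      by (simp add: sum_negf sum_distrib_left)
    finally show ?thesis by simp
  qed
  have "(\<integral>\<^sup>+\<omega>. ennreal ((\<Prod>k\<in>S. indicator {s<..} (X k \<omega>)) * exp (-(t * (\<Sum>k\<in>{1..n}. X k \<omega>)))) \<partial>M)
     = (\<Prod>k\<in>{1..n}. \<integral>\<^sup>+x. ennreal (gamma_density a l x) * ennreal (f k x) \<partial>lborel)"
    unfolding pw by (rule factor) (auto simp: f_def)
  also have "\<dots> = (\<Prod>k\<in>{1..n}. ennreal ((l/(l+t)) powr a * (if k \<in> S then Sv a ((l+t) * s) else 1)))"
  proof (intro prod.cong refl)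
    fix k assume k: "k \<in> {1..n}"
    show "(\<integral>\<^sup>+x. ennreal (gamma_density a l x) * ennreal (f k x) \<partial>lborel) = ennreal ((l/(l+t)) powr a * (if k \<in> S then Sv a ((l+t) * s) else 1))"
      by (cases "k \<in> S") (simp_all add: f_def gd_tail[OF a_pos l_pos t s] gd_exp[OF a_pos l_pos t])
  qed
  also have "\<dots> = ennreal (\<Prod>k\<in>{1..n}. (l/(l+t)) powr a * (if k \<in> S then Sv a ((l+t) * s) else 1))"
    using r a_pos s Sv_nonneg[OF a_pos, of "(l+t) * s"] by (intro prod_ennreal) auto
  also have "(\<Prod>k\<in>{1..n}. (l/(l+t)) powr a * (if k \<in> S then Sv a ((l+t) * s) else 1)) = (l/(l+t)) powr (real n * a) * Sv a ((l+t) * s) ^ card S"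
  proof -
    have "(\<Prod>k\<in>{1..n}. if k \<in> S then Sv a ((l+t) * s) else 1) = (\<Prod>k\<in>S. Sv a ((l+t) * s))"
      by (rule prod_if_inter[OF S]) simp
    thus ?thesis using r l_pos by (simp add: prod.distrib pow_powr)
  qed
  finally show ?thesis .
qed

lemma N1:
  assumes j: "j \<in> {1..n}"
  shows "(\<integral>\<^sup>+\<omega>. ennreal (X j \<omega> / (\<Sum>k\<in>{1..n}. X k \<omega>)) \<partial>M) = ennreal (1 / real n)"
proof -
  interpret P: pair_sigma_finite M lborel ..
  have Xj[measurable]: "X j \<in> borel_measurable M" using Xm[OF j] .
  have n: "n \<ge> 1" using j by simp
  define T where "T \<omega> = (\<Sum>k\<in>{1..n}. X k \<omega>)" for \<omega>
  have Tm'[measurable]: "T \<in> borel_measurable M" unfolding T_def by (rule Tm)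
  have "AE \<omega> in M. ennreal (X j \<omega> / T \<omega>) = (\<integral>\<^sup>+t. ennreal (max (X j \<omega>) 0 * exp (-(t * T \<omega>))) * indicator {0..} t \<partial>lborel)"
    using AE_pos
  proof eventually_elim
    case (elim \<omega>)
    have Tpos: "T \<omega> > 0" unfolding T_def using elim n
      by (intro sum_pos) auto
    have xj: "X j \<omega> > 0" using elim j by auto
    have "(\<integral>\<^sup>+t. ennreal (max (X j \<omega>) 0 * exp (-(t * T \<omega>))) * indicator {0..} t \<partial>lborel)
        = (\<integral>\<^sup>+t. ennreal (X j \<omega>) * (ennreal (exp (-(t * T \<omega>))) * indicator {0..} t) \<partial>lborel)"
      using xj by (intro nn_integral_cong) (simp add: ennreal_mult mult.assoc)
    also have "\<dots> = ennreal (X j \<omega>) * ennreal (1 / T \<omega>)"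
      by (subst nn_integral_cmult) (auto simp: laplace_inv[OF Tpos])
    also have "\<dots> = ennreal (X j \<omega> / T \<omega>)" using xj Tpos by (simp add: ennreal_mult[symmetric])
    finally show ?case by simp
  qed
  hence "(\<integral>\<^sup>+\<omega>. ennreal (X j \<omega> / T \<omega>) \<partial>M)
      = (\<integral>\<^sup>+\<omega>. (\<integral>\<^sup>+t. ennreal (max (X j \<omega>) 0 * exp (-(t * T \<omega>))) * indicator {0..} t \<partial>lborel) \<partial>M)"
    by (rule nn_integral_cong_AE)
  also have "\<dots> = (\<integral>\<^sup>+t. (\<integral>\<^sup>+\<omega>. ennreal (max (X j \<omega>) 0 * exp (-(t * T \<omega>))) * indicator {0..} t \<partial>M) \<partial>lborel)"
    by (rule P.Fubini'[symmetric]) measurable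
  also have "\<dots> = (\<integral>\<^sup>+t. ennreal ((l/(l+t)) powr (real n * a) * (a/(l+t))) * indicator {0..} t \<partial>lborel)"
  proof (intro nn_integral_cong)
    fix t :: real
    show "(\<integral>\<^sup>+\<omega>. ennreal (max (X j \<omega>) 0 * exp (-(t * T \<omega>))) * indicator {0..} t \<partial>M)
        = ennreal ((l/(l+t)) powr (real n * a) * (a/(l+t))) * indicator {0..} t"
    proof (cases "t \<ge> 0")
      case True
      then show ?thesis
        by (subst nn_integral_multc) (auto simp: E1[OF j True, folded T_def])
    qed auto
  qed
  also have "\<dots> = ennreal (a / (real n * a))"
    using a_pos l_pos n by (intro t_integral) auto
  also have "a / (real n * a) = 1 / real n" using a_pos by simp
  finally show ?thesis by (simp add: T_def)
qed

lemma N2: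
  assumes S: "S \<subseteq> {1..n}" "S \<noteq> {}"
  shows "(\<integral>\<^sup>+\<omega>. ennreal (Min ((\<lambda>k. X k \<omega>) ` S) / (\<Sum>k\<in>{1..n}. X k \<omega>)) \<partial>M)
       = Kp a (card S) * ennreal (1 / (real n * a))"
proof -
  interpret P: pair_sigma_finite M lborel ..
  have fS: "finite S" using S finite_subset by blast
  have n: "n \<ge> 1" using S by auto
  define T where "T \<omega> = (\<Sum>k\<in>{1..n}. X k \<omega>)" for \<omega>
  have Tm'[measurable]: "T \<in> borel_measurable M" unfolding T_def by (rule Tm)
  define mn where "mn \<omega> = Min ((\<lambda>k. X k \<omega>) ` S)" for \<omega>
  have mnm[measurable]: "mn \<in> borel_measurable M" unfolding mn_def
    by (rule borel_measurable_Min[OF fS]) (use Xm S in auto)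
  have prodind: "(\<Prod>k\<in>S. indicator {s<..} (X k \<omega>) :: real) = (if s < mn \<omega> then 1 else 0)" for s \<omega>
    using fS S by (simp add: prod_indicator_real mn_def Min_gr_iff)
  define G where "G \<omega> t s = ennreal (if s < mn \<omega> then exp (-(t * T \<omega>)) else 0) * indicator {0..} s" for \<omega> t s
  have "AE \<omega> in M. ennreal (mn \<omega> / T \<omega>) = (\<integral>\<^sup>+t. (\<integral>\<^sup>+s. G \<omega> t s \<partial>lborel) * indicator {0..} t \<partial>lborel)"
    using AE_pos
  proof eventually_elim
    case (elim \<omega>)
    have Tpos: "T \<omega> > 0" unfolding T_def using elim n
      by (intro sum_pos) auto
    have mpos: "mn \<omega> > 0" unfolding mn_def using elim S fS by (auto simp: Min_gr_iff)
    have inner: "(\<integral>\<^sup>+s. G \<omega> t s \<partial>lborel) = ennreal (exp (-(t * T \<omega>))) * ennreal (mn \<omega>)" for t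
    proof -
      have "(\<integral>\<^sup>+s. G \<omega> t s \<partial>lborel) = (\<integral>\<^sup>+s. ennreal (exp (-(t * T \<omega>))) * indicator {0..<mn \<omega>} s \<partial>lborel)"
        by (intro nn_integral_cong) (auto simp: G_def indicator_def)
      also have "\<dots> = ennreal (exp (-(t * T \<omega>))) * ennreal (mn \<omega>)"
        using mpos by (simp add: nn_integral_cmult)
      finally show ?thesis .
    qed
    have "(\<integral>\<^sup>+t. (\<integral>\<^sup>+s. G \<omega> t s \<partial>lborel) * indicator {0..} t \<partial>lborel)
        = (\<integral>\<^sup>+t. (ennreal (exp (-(t * T \<omega>))) * indicator {0..} t) * ennreal (mn \<omega>) \<partial>lborel)"
      unfolding inner by (intro nn_integral_cong) (simp add: mult_ac)
    also have "\<dots> = ennreal (1 / T \<omega>) * ennreal (mn \<omega>)"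
      by (subst nn_integral_multc) (auto simp: laplace_inv[OF Tpos])
    also have "\<dots> = ennreal (mn \<omega> / T \<omega>)" using mpos Tpos by (simp add: ennreal_mult[symmetric])
    finally show ?case by simp
  qed
  hence "(\<integral>\<^sup>+\<omega>. ennreal (mn \<omega> / T \<omega>) \<partial>M)
      = (\<integral>\<^sup>+\<omega>. (\<integral>\<^sup>+t. (\<integral>\<^sup>+s. G \<omega> t s \<partial>lborel) * indicator {0..} t \<partial>lborel) \<partial>M)"
    by (rule nn_integral_cong_AE)
  also have "\<dots> = (\<integral>\<^sup>+t. (\<integral>\<^sup>+\<omega>. (\<integral>\<^sup>+s. G \<omega> t s \<partial>lborel) * indicator {0..} t \<partial>M) \<partial>lborel)"
    by (rule P.Fubini'[symmetric]) (unfold G_def, measurable)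
  also have "\<dots> = (\<integral>\<^sup>+t. ennreal ((l/(l+t)) powr (real n * a) * (1/(l+t))) * indicator {0..} t * Kp a (card S) \<partial>lborel)"
  proof (intro nn_integral_cong)
    fix t :: real
    show "(\<integral>\<^sup>+\<omega>. (\<integral>\<^sup>+s. G \<omega> t s \<partial>lborel) * indicator {0..} t \<partial>M)
        = ennreal ((l/(l+t)) powr (real n * a) * (1/(l+t))) * indicator {0..} t * Kp a (card S)"
    proof (cases "t \<ge> 0")
      case True
      have r: "l + t > 0" using l_pos True by simp
      have "(\<integral>\<^sup>+\<omega>. (\<integral>\<^sup>+s. G \<omega> t s \<partial>lborel) \<partial>M) = (\<integral>\<^sup>+s. (\<integral>\<^sup>+\<omega>. G \<omega> t s \<partial>M) \<partial>lborel)"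
        by (rule P.Fubini'[symmetric]) (unfold G_def, measurable)
      also have "\<dots> = (\<integral>\<^sup>+s. ennreal ((l/(l+t)) powr (real n * a)) * (ennreal (Sv a ((l+t) * s) ^ card S) * indicator {0..} s) \<partial>lborel)"
      proof (intro nn_integral_cong)
        fix s :: real
        show "(\<integral>\<^sup>+\<omega>. G \<omega> t s \<partial>M) = ennreal ((l/(l+t)) powr (real n * a)) * (ennreal (Sv a ((l+t) * s) ^ card S) * indicator {0..} s)"
        proof (cases "s \<ge> 0")
          case s: True
          have "(\<integral>\<^sup>+\<omega>. G \<omega> t s \<partial>M) = (\<integral>\<^sup>+\<omega>. ennreal ((\<Prod>k\<in>S. indicator {s<..} (X k \<omega>)) * exp (-(t * (\<Sum>k\<in>{1..n}. X k \<omega>)))) \<partial>M)"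
            using s by (intro nn_integral_cong) (simp add: G_def prodind T_def)
          also have "\<dots> = ennreal ((l/(l+t)) powr (real n * a) * Sv a ((l+t) * s) ^ card S)"
            by (rule E2[OF S(1) True s])
          moreover have "Sv a ((l+t) * s) \<ge> 0" using s r by (intro Sv_nonneg[OF a_pos]) simp
          ultimately show ?thesis using s by (simp add: ennreal_mult)
        qed (simp add: G_def)
      qed
      also have "\<dots> = ennreal ((l/(l+t)) powr (real n * a)) * (ennreal (1/(l+t)) * Kp a (card S))"
      proof -
        have eqf: "(\<lambda>s. ennreal (Sv a ((l+t) * s) ^ card S) * indicator {0..} s)
           = (\<lambda>s. ennreal (Svm a ((l+t) * s) ^ card S) * indicator {0..} s)"
          using r by (auto simp: fun_eq_iff indicator_def Sv_Svm[OF a_pos])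
        have hm: "(\<lambda>s. ennreal (Sv a ((l+t) * s) ^ card S) * indicator {0..} s) \<in> borel_measurable lborel"
          unfolding eqf by simp
        show ?thesis unfolding nn_integral_cmult[OF hm] Kp_scale[OF a_pos r] ..
      qed
      finally have fin: "(\<integral>\<^sup>+\<omega>. (\<integral>\<^sup>+s. G \<omega> t s \<partial>lborel) \<partial>M) = ennreal ((l/(l+t)) powr (real n * a)) * (ennreal (1/(l+t)) * Kp a (card S))" .
      have e2: "ennreal ((l/(l+t)) powr (real n * a) * (1/(l+t))) = ennreal ((l/(l+t)) powr (real n * a)) * ennreal (1/(l+t))"
        using r by (intro ennreal_mult) auto
      show ?thesis unfolding e2 using True fin by (simp add: mult_ac)
    qed (simp)
  qed
  also have "\<dots> = (\<integral>\<^sup>+t. ennreal ((l/(l+t)) powr (real n * a) * (1/(l+t))) * indicator {0..} t \<partial>lborel) * Kp a (card S)"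
    by (rule nn_integral_multc) measurable
  also have "(\<integral>\<^sup>+t. ennreal ((l/(l+t)) powr (real n * a) * (1/(l+t))) * indicator {0..} t \<partial>lborel) = ennreal (1 / (real n * a))"
    using a_pos l_pos n by (intro t_integral) auto
  finally show ?thesis by (simp add: T_def mn_def mult.commute)
qed

lemma N3:
  assumes S: "S \<subseteq> {1..n}" and j: "j \<in> S"
  shows "Kp a (card S) < \<infinity>"
    and "has_bochner_integral M (\<lambda>\<omega>. (X j \<omega> - Min ((\<lambda>k. X k \<omega>) ` S)) / (\<Sum>k\<in>{1..n}. X k \<omega>))
           (1 / real n - enn2real (Kp a (card S)) / (real n * a))"
proof -
  have Sne: "S \<noteq> {}" using j by auto
  have fS: "finite S" using S finite_subset by blast
  have jn: "j \<in> {1..n}" using S j by auto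
  have n: "n \<ge> 1" using jn by simp
  define T where "T \<omega> = (\<Sum>k\<in>{1..n}. X k \<omega>)" for \<omega>
  have Tm'[measurable]: "T \<in> borel_measurable M" unfolding T_def by (rule Tm)
  define mn where "mn \<omega> = Min ((\<lambda>k. X k \<omega>) ` S)" for \<omega>
  have mnm[measurable]: "mn \<in> borel_measurable M" unfolding mn_def
    by (rule borel_measurable_Min[OF fS]) (use Xm S in auto)
  have Xj[measurable]: "X j \<in> borel_measurable M" using Xm[OF jn] .
  have AEnn: "AE \<omega> in M. 0 \<le> (X j \<omega> - mn \<omega>) / T \<omega>"
    using AE_pos
  proof eventually_elim
    case (elim \<omega>)
    have Tpos: "T \<omega> > 0" unfolding T_def using elim n by (intro sum_pos) auto
    have "mn \<omega> \<le> X j \<omega>" unfolding mn_def using fS j by (intro Min_le) auto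
    thus ?case using Tpos by simp
  qed
  have "AE \<omega> in M. ennreal ((X j \<omega> - mn \<omega>) / T \<omega>) + ennreal (mn \<omega> / T \<omega>) = ennreal (X j \<omega> / T \<omega>)"
    using AE_pos
  proof eventually_elim
    case (elim \<omega>)
    have Tpos: "T \<omega> > 0" unfolding T_def using elim n by (intro sum_pos) auto
    have "mn \<omega> \<le> X j \<omega>" unfolding mn_def using fS j by (intro Min_le) auto
    moreover have "mn \<omega> > 0" unfolding mn_def using elim S fS Sne by (auto simp: Min_gr_iff)
    ultimately have h1: "0 \<le> (X j \<omega> - mn \<omega>) / T \<omega>" "0 \<le> mn \<omega> / T \<omega>" using Tpos by auto
    have "ennreal ((X j \<omega> - mn \<omega>) / T \<omega>) + ennreal (mn \<omega> / T \<omega>) = ennreal ((X j \<omega> - mn \<omega>) / T \<omega> + mn \<omega> / T \<omega>)"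
      by (rule ennreal_plus[symmetric, OF h1])
    also have "(X j \<omega> - mn \<omega>) / T \<omega> + mn \<omega> / T \<omega> = X j \<omega> / T \<omega>" by (simp add: diff_divide_distrib)
    finally show ?case .
  qed
  hence "(\<integral>\<^sup>+\<omega>. ennreal ((X j \<omega> - mn \<omega>) / T \<omega>) + ennreal (mn \<omega> / T \<omega>) \<partial>M) = (\<integral>\<^sup>+\<omega>. ennreal (X j \<omega> / T \<omega>) \<partial>M)"
    by (rule nn_integral_cong_AE)
  moreover have "(\<integral>\<^sup>+\<omega>. ennreal ((X j \<omega> - mn \<omega>) / T \<omega>) + ennreal (mn \<omega> / T \<omega>) \<partial>M)
     = (\<integral>\<^sup>+\<omega>. ennreal ((X j \<omega> - mn \<omega>) / T \<omega>) \<partial>M) + (\<integral>\<^sup>+\<omega>. ennreal (mn \<omega> / T \<omega>) \<partial>M)"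
    by (rule nn_integral_add) measurable
  ultimately have sum: "(\<integral>\<^sup>+\<omega>. ennreal ((X j \<omega> - mn \<omega>) / T \<omega>) \<partial>M) + Kp a (card S) * ennreal (1 / (real n * a)) = ennreal (1 / real n)"
    using N1[OF jn] N2[OF S Sne] by (simp add: T_def mn_def)
  have pos: "1 / (real n * a) > 0" using n a_pos by simp
  have "Kp a (card S) * ennreal (1 / (real n * a)) \<le> ennreal (1 / real n)"
    unfolding sum[symmetric] by simp
  hence "Kp a (card S) * ennreal (1 / (real n * a)) < \<infinity>"
    by (rule order_le_less_trans) simp
  thus Kfin: "Kp a (card S) < \<infinity>" using pos by (auto simp: ennreal_mult_less_top)
  define K where "K = enn2real (Kp a (card S))"
  have KK: "Kp a (card S) = ennreal K" unfolding K_def using Kfin by (simp add: less_top)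
  have K0: "K \<ge> 0" unfolding K_def by simp
  have eqK: "Kp a (card S) * ennreal (1 / (real n * a)) = ennreal (K / (real n * a))"
    unfolding KK using K0 pos by (simp add: ennreal_mult[symmetric])
  have sum2: "(\<integral>\<^sup>+\<omega>. ennreal ((X j \<omega> - mn \<omega>) / T \<omega>) \<partial>M) + ennreal (K / (real n * a)) = ennreal (1 / real n)"
    using sum unfolding eqK .
  have "ennreal (K / (real n * a)) \<le> ennreal (1 / real n)"
    unfolding sum2[symmetric] by (rule add_increasing) auto
  hence le: "K / (real n * a) \<le> 1 / real n" by (simp add: ennreal_le_iff)
  have "(\<integral>\<^sup>+\<omega>. ennreal ((X j \<omega> - mn \<omega>) / T \<omega>) \<partial>M)
      = ((\<integral>\<^sup>+\<omega>. ennreal ((X j \<omega> - mn \<omega>) / T \<omega>) \<partial>M) + ennreal (K / (real n * a))) - ennreal (K / (real n * a))"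
    by (simp add: ennreal_add_diff_cancel_right)
  also have "\<dots> = ennreal (1 / real n) - ennreal (K / (real n * a))" unfolding sum2 ..
  also have "\<dots> = ennreal (1 / real n - K / (real n * a))"
    using K0 pos by (simp add: ennreal_minus)
  finally have val: "(\<integral>\<^sup>+\<omega>. ennreal ((X j \<omega> - mn \<omega>) / T \<omega>) \<partial>M) = ennreal (1 / real n - K / (real n * a))" .
  have "has_bochner_integral M (\<lambda>\<omega>. (X j \<omega> - mn \<omega>) / T \<omega>) (1 / real n - K / (real n * a))"
    by (rule has_bochner_integral_nn_integral[OF _ AEnn _ val]) (use le in auto)
  thus "has_bochner_integral M (\<lambda>\<omega>. (X j \<omega> - Min ((\<lambda>k. X k \<omega>) ` S)) / (\<Sum>k\<in>{1..n}. X k \<omega>))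
           (1 / real n - enn2real (Kp a (card S)) / (real n * a))"
    by (simp add: T_def mn_def K_def)
qed

lemma EX:
  assumes j: "j \<in> {1..n}"
  shows "has_bochner_integral M (X j) (a / l)"
proof -
  have Xj[measurable]: "X j \<in> borel_measurable M" using Xm[OF j] .
  have "(\<integral>\<^sup>+\<omega>. ennreal (X j \<omega>) \<partial>M) = (\<integral>\<^sup>+\<omega>. ennreal (max (X j \<omega>) 0 * exp (-(0 * (\<Sum>k\<in>{1..n}. X k \<omega>)))) \<partial>M)"
    by (intro nn_integral_cong) (auto simp: max_def ennreal_neg)
  also have "\<dots> = ennreal (a / l)" using E1[OF j, of 0] l_pos by simp
  finally have v: "(\<integral>\<^sup>+\<omega>. ennreal (X j \<omega>) \<partial>M) = ennreal (a / l)" .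
  have "AE \<omega> in M. 0 \<le> X j \<omega>" using AE_pos
  proof eventually_elim
    case (elim \<omega>)
    hence "X j \<omega> > 0" using j by blast
    thus ?case by simp
  qed
  thus ?thesis by (intro has_bochner_integral_nn_integral[OF _ _ _ v]) (use a_pos l_pos in auto)
qed

lemma Emin:
  assumes S: "S \<subseteq> {1..n}" "S \<noteq> {}"
  shows "has_bochner_integral M (\<lambda>\<omega>. Min ((\<lambda>k. X k \<omega>) ` S)) (enn2real (Kp a (card S)) / l)"
proof -
  interpret P: pair_sigma_finite M lborel ..
  have fS: "finite S" using S finite_subset by blast
  obtain j where j: "j \<in> S" using S by auto
  define mn where "mn \<omega> = Min ((\<lambda>k. X k \<omega>) ` S)" for \<omega>
  have mnm[measurable]: "mn \<in> borel_measurable M" unfolding mn_def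
    by (rule borel_measurable_Min[OF fS]) (use Xm S in auto)
  have prodind: "(\<Prod>k\<in>S. indicator {s<..} (X k \<omega>) :: real) = (if s < mn \<omega> then 1 else 0)" for s \<omega>
    using fS S by (simp add: prod_indicator_real mn_def Min_gr_iff)
  define G where "G \<omega> s = ennreal (if s < mn \<omega> then 1 else 0) * indicator {0..} s" for \<omega> s
  have AEm: "AE \<omega> in M. mn \<omega> > 0"
    using AE_pos by eventually_elim (use S fS in \<open>auto simp: mn_def Min_gr_iff\<close>)
  have "AE \<omega> in M. ennreal (mn \<omega>) = (\<integral>\<^sup>+s. G \<omega> s \<partial>lborel)"
    using AEm
  proof eventually_elim
    case (elim \<omega>)
    have "(\<integral>\<^sup>+s. G \<omega> s \<partial>lborel) = (\<integral>\<^sup>+s. indicator {0..<mn \<omega>} s \<partial>lborel)"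
      by (intro nn_integral_cong) (auto simp: G_def indicator_def)
    also have "\<dots> = ennreal (mn \<omega>)" using elim by simp
    finally show ?case by simp
  qed
  hence "(\<integral>\<^sup>+\<omega>. ennreal (mn \<omega>) \<partial>M) = (\<integral>\<^sup>+\<omega>. (\<integral>\<^sup>+s. G \<omega> s \<partial>lborel) \<partial>M)"
    by (rule nn_integral_cong_AE)
  also have "\<dots> = (\<integral>\<^sup>+s. (\<integral>\<^sup>+\<omega>. G \<omega> s \<partial>M) \<partial>lborel)"
    by (rule P.Fubini'[symmetric]) (unfold G_def, measurable)
  also have "\<dots> = (\<integral>\<^sup>+s. ennreal (Sv a (l * s) ^ card S) * indicator {0..} s \<partial>lborel)"
  proof (intro nn_integral_cong)
    fix s :: real
    show "(\<integral>\<^sup>+\<omega>. G \<omega> s \<partial>M) = ennreal (Sv a (l * s) ^ card S) * indicator {0..} s"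
    proof (cases "s \<ge> 0")
      case s: True
      have "(\<integral>\<^sup>+\<omega>. G \<omega> s \<partial>M) = (\<integral>\<^sup>+\<omega>. ennreal ((\<Prod>k\<in>S. indicator {s<..} (X k \<omega>)) * exp (-(0 * (\<Sum>k\<in>{1..n}. X k \<omega>)))) \<partial>M)"
        using s by (intro nn_integral_cong) (simp add: G_def prodind)
      also have "\<dots> = ennreal ((l/(l+0)) powr (real n * a) * Sv a ((l+0) * s) ^ card S)"
        by (rule E2[OF S(1) _ s]) simp
      finally show ?thesis using s l_pos by simp
    qed (simp add: G_def)
  qed
  also have "\<dots> = ennreal (1/l) * Kp a (card S)" by (rule Kp_scale[OF a_pos l_pos])
  finally have v0: "(\<integral>\<^sup>+\<omega>. ennreal (mn \<omega>) \<partial>M) = ennreal (1/l) * Kp a (card S)" .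
  have Kfin: "Kp a (card S) < \<infinity>" by (rule N3(1)[OF S(1) j])
  have v: "(\<integral>\<^sup>+\<omega>. ennreal (mn \<omega>) \<partial>M) = ennreal (enn2real (Kp a (card S)) / l)"
    unfolding v0 using Kfin l_pos
    by (cases "Kp a (card S)") (auto simp: ennreal_mult[symmetric])
  have "has_bochner_integral M mn (enn2real (Kp a (card S)) / l)"
    by (rule has_bochner_integral_nn_integral[OF _ _ _ v]) (use AEm l_pos in \<open>auto elim: AE_mp\<close>)
  moreover have "mn = (\<lambda>\<omega>. Min ((\<lambda>k. X k \<omega>) ` S))" by (rule ext) (simp add: mn_def)
  ultimately show ?thesis by simp
qed

end


theorem corollary3p6:
  fixes M :: "'a measure" and X :: "nat \<Rightarrow> 'a \<Rightarrow> real"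
    and n m i :: nat and a l :: real
  assumes "prob_space M"
    and "a > 0" and "l > 0"
    and "2 \<le> m" and "m \<le> n"
    and "prob_space.indep_vars M (\<lambda>_. borel) X {1..n}"
    and "\<And>k. k \<in> {1..n} \<Longrightarrow> distributed M lborel (X k) (\<lambda>x. ennreal (gamma_density a l x))"
    and "1 \<le> i" and "i \<le> m"
  shows "(\<integral>\<omega>. IG_hat n m i X \<omega> \<partial>M)
           = 1 / real m * (1 - 1 / a *
               (LBINT v:{0..}. (1 - lower_inc_gamma a v / Gamma a) ^ m))
       \<and> 1 / real m * (1 - 1 / a *
               (LBINT v:{0..}. (1 - lower_inc_gamma a v / Gamma a) ^ m))
           = IG_min M m X"
proof -
  note a = \<open>a > 0\<close> and l = \<open>l > 0\<close>
  interpret G: gsetup M X n a l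
    using assms by (simp add: gsetup_def gsetup_axioms_def)
  have m1: "1 \<le> m" using assms by simp
  have mn: "m \<le> n" using assms by simp
  have n1: "1 \<le> n" using m1 mn by simp
  define K where "K = enn2real (Kp a m)"
  have LB: "(LBINT v:{0..}. (1 - lower_inc_gamma a v / Gamma a) ^ m) = K"
    unfolding K_def by (rule Kreal[OF a])
  have RHS: "1 / real m * (1 - 1 / a * K) = (a - K) / (real m * a)"
    using a m1 by (simp add: field_simps)
  have h1: "has_bochner_integral M (X 1) (a / l)" by (rule G.EX) (use n1 in simp)
  have h2: "has_bochner_integral M (\<lambda>\<omega>. Min ((\<lambda>j. X j \<omega>) ` {1..m})) (K / l)"
    using G.Emin[of "{1..m}"] mn m1 by (simp add: K_def)
  have i1: "(\<integral>\<omega>. X 1 \<omega> - Min ((\<lambda>j. X j \<omega>) ` {1..m}) \<partial>M) = a / l - K / l"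
    using has_bochner_integral_diff[OF h1 h2] by (simp add: has_bochner_integral_integral_eq)
  have i2: "(\<integral>\<omega>. X 1 \<omega> \<partial>M) = a / l"
    using h1 by (simp add: has_bochner_integral_integral_eq)
  have IGm: "IG_min M m X = (a - K) / (real m * a)"
    unfolding IG_min_def i1 i2 using a l m1 by (simp add: field_simps)
  define SS where "SS = {S. S \<subseteq> {1..n} \<and> card S = m}"
  define T where "T \<omega> = (\<Sum>k\<in>{1..n}. X k \<omega>)" for \<omega>
  define P where "P = (\<Prod>k=1..m-1. real (n - k))"
  define c0 where "c0 = fact (m - 1) / P"
  define v where "v = 1 / real n - K / (real n * a)"
  have each: "has_bochner_integral M (\<lambda>\<omega>. (X (sorted_list_of_set S ! (i - 1)) \<omega> - Min ((\<lambda>j. X j \<omega>) ` S)) / T \<omega>) v"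
    if S: "S \<in> SS" for S
  proof -
    have Ss: "S \<subseteq> {1..n}" and cS: "card S = m" using S by (auto simp: SS_def)
    have fS: "finite S" using Ss finite_subset by blast
    have "sorted_list_of_set S ! (i - 1) \<in> set (sorted_list_of_set S)"
      using cS assms(8,9) by (intro nth_mem) simp
    hence js: "sorted_list_of_set S ! (i - 1) \<in> S" using fS by simp
    show ?thesis using G.N3(2)[OF Ss js] cS by (simp add: T_def v_def K_def)
  qed
  have hs: "has_bochner_integral M (\<lambda>\<omega>. c0 * (\<Sum>S\<in>SS. (X (sorted_list_of_set S ! (i - 1)) \<omega> - Min ((\<lambda>j. X j \<omega>) ` S)) / T \<omega>))
      (c0 * (\<Sum>S\<in>SS. v))"
    by (intro has_bochner_integral_mult_right has_bochner_integral_sum each)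
  have IGh_eq: "IG_hat n m i X = (\<lambda>\<omega>. c0 * (\<Sum>S\<in>SS. (X (sorted_list_of_set S ! (i - 1)) \<omega> - Min ((\<lambda>j. X j \<omega>) ` S)) / T \<omega>))"
    by (rule ext) (simp add: IG_hat_def c0_def P_def SS_def T_def sum_divide_distrib)
  have cardSS: "card SS = n choose m"
    unfolding SS_def using n_subsets[of "{1..n}" m] by simp
  have Ppos: "P > 0" unfolding P_def using mn by (intro prod_pos) auto
  have comb: "real (n choose m) * fact (m - 1) * real m = real n * P"
    unfolding P_def by (rule comb_id[OF m1 mn])
  have val: "c0 * (\<Sum>S\<in>SS. v) = (a - K) / (real m * a)"
  proof -
    have e1: "c0 * (\<Sum>S\<in>SS. v) = (real (n choose m) * fact (m - 1)) / P * v"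
      by (simp add: c0_def cardSS)
    have e2: "real (n choose m) * fact (m - 1) = real n * P / real m"
      using comb m1 by (simp add: field_simps)
    have "c0 * (\<Sum>S\<in>SS. v) = real n * P / real m / P * v" unfolding e1 e2 ..
    also have "\<dots> = real n / real m * v" using Ppos by simp
    also have "\<dots> = (a - K) / (real m * a)" using a m1 n1 by (simp add: v_def field_simps)
    finally show ?thesis .
  qed
  have IGh: "(\<integral>\<omega>. IG_hat n m i X \<omega> \<partial>M) = (a - K) / (real m * a)"
    unfolding IGh_eq by (rule has_bochner_integral_integral_eq[OF hs[unfolded val]])
  show ?thesis unfolding LB RHS IGh IGm by simp
qed

end
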